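(* There is an absolute constant $C$ such that for every simple temporal clique on $n$ vertices and every forward fireworks cover $S^-_T$ of it (for any outcome of the arbitrary choices in the construction), $|S^-_T|\le \frac{3}{4}\binom{n}{2}+Cn$.
   Context: A simple temporal clique is a pair $\mathcal{G}=(G,\lambda)$ where $G=(V,E)$ is the complete graph on a finite set $V$ of $n$ vertices and $\lambda:E\to\mathbb{N}$ assigns to each edge a single integer label such that any two distinct edges sharing an endpoint have different labels; the label of an arc $(x,y)$ is $\lambda(\{x,y\})$. For a vertex $v$, $e^-(v)$ is the edge incident to $v$ with smallest label. Forward construction: let $E^-$ be the set of arcs $(u,v)$ with $\{u,v\}=e^-(v)$, except that if $e^-(u)=e^-(v)=\{u,v\}$ only one of the two arcs $(u,v),(v,u)$ is included (arbitrarily). Initialize $E^-_T:=E^-$. For every vertex $v$ of out-degree at least $2$ in $(V,E^-)$, let $(v,u_1),\dots,(v,u_\ell)$ be its out-arcs in $E^-$, where $(v,u_\ell)$ has the largest label; for each $i<\ell$, if $u_i$ has out-degree $0$ in $(V,E^-)$, replace $(v,u_i)$ by $(u_i,v)$ in $E^-_T$, and otherwise remove $(v,u_i)$ from $E^-_T$. An emitter is a vertex of out-degree $0$ in $(V,E^-_T)$. The forward fireworks cover is $S^-_T=\{\{u,v\}\in E:(u,v)\in E^-_T\}\cup\{\{u,v\}\in E: u \text{ is an emitter}\}$. *)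

theory Defs
  imports Complex_Main
begin

text \<open>Vertices are natural numbers (any finite vertex set can be relabelled into nat).
  Edges of the complete graph on V are the sets {x,y} with x, y in V, x distinct from y.
  Arcs are ordered pairs.\<close>

definition clique_edges :: "nat set \<Rightarrow> nat set set" where
  "clique_edges V = {{x, y} | x y. x \<in> V \<and> y \<in> V \<and> x \<noteq> y}"

definition simple_temporal_clique :: "nat set \<Rightarrow> (nat set \<Rightarrow> nat) \<Rightarrow> bool" where
  "simple_temporal_clique V lab \<longleftrightarrow> finite V \<and>
     (\<forall>e \<in> clique_edges V. \<forall>f \<in> clique_edges V. e \<noteq> f \<and> e \<inter> f \<noteq> {} \<longrightarrow> lab e \<noteq> lab f)"

definition emin :: "nat set \<Rightarrow> (nat set \<Rightarrow> nat) \<Rightarrow> nat \<Rightarrow> nat set" where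
  "emin V lab v = (ARG_MIN lab e. e \<in> clique_edges V \<and> v \<in> e)"

text \<open>Admissible choices of E^-: all arcs (u,v) with {u,v} = e^-(v), except that when
  e^-(u) = e^-(v) = {u,v} exactly one of (u,v), (v,u) is included (arbitrarily).\<close>
definition valid_Eminus :: "nat set \<Rightarrow> (nat set \<Rightarrow> nat) \<Rightarrow> (nat \<times> nat) set \<Rightarrow> bool" where
  "valid_Eminus V lab A \<longleftrightarrow>
     (\<forall>(u, v) \<in> A. u \<in> V \<and> v \<in> V \<and> u \<noteq> v \<and> {u, v} = emin V lab v) \<and>
     (\<forall>u \<in> V. \<forall>v \<in> V. u \<noteq> v \<and> {u, v} = emin V lab v \<longrightarrow>
        (if emin V lab u = {u, v}
         then ((u, v) \<in> A \<longleftrightarrow> (v, u) \<notin> A)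
         else (u, v) \<in> A))"

definition outdeg :: "(nat \<times> nat) set \<Rightarrow> nat \<Rightarrow> nat" where
  "outdeg A v = card {u. (v, u) \<in> A}"

definition non_top_arc :: "(nat set \<Rightarrow> nat) \<Rightarrow> (nat \<times> nat) set \<Rightarrow> nat \<Rightarrow> nat \<Rightarrow> bool" where
  "non_top_arc lab A v u \<longleftrightarrow> (v, u) \<in> A \<and> outdeg A v \<ge> 2 \<and>
     (\<exists>w. (v, w) \<in> A \<and> lab {v, w} > lab {v, u})"

definition ET :: "(nat set \<Rightarrow> nat) \<Rightarrow> (nat \<times> nat) set \<Rightarrow> (nat \<times> nat) set" where
  "ET lab A = {(v, u). (v, u) \<in> A \<and> \<not> non_top_arc lab A v u}
            \<union> {(u, v). non_top_arc lab A v u \<and> outdeg A u = 0}"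

definition emitters :: "nat set \<Rightarrow> (nat set \<Rightarrow> nat) \<Rightarrow> (nat \<times> nat) set \<Rightarrow> nat set" where
  "emitters V lab A = {u \<in> V. outdeg (ET lab A) u = 0}"

definition fireworks_cover :: "nat set \<Rightarrow> (nat set \<Rightarrow> nat) \<Rightarrow> (nat \<times> nat) set \<Rightarrow> nat set set" where
  "fireworks_cover V lab A =
     {{u, v} | u v. (u, v) \<in> ET lab A}
     \<union> {e \<in> clique_edges V. \<exists>u \<in> emitters V lab A. u \<in> e}"

end

theory Submission
  imports Defs
begin

lemma choose2_real: "2 * real (m choose 2) = real m * (real m - 1)"
proof -
  have "even (m * (m - 1))"
  proof (cases "even m")
    case True then show ?thesis by simp
  next
    case False then have "even (m - 1)" by simp
    then show ?thesis by simp
  qed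
  then have "2 * (m choose 2) = m * (m - 1)" by (simp add: choose_two)
  then have "real (2 * (m choose 2)) = real (m * (m - 1))" by simp
  then show ?thesis by (cases m) (auto simp: algebra_simps)
qed

lemma main:
  assumes st: "simple_temporal_clique V lab" and va: "valid_Eminus V lab A"
  shows "real (card (fireworks_cover V lab A)) \<le> 3/4 * real (card V choose 2) + 2 * real (card V)"
proof -
  have finV: "finite V" using st by (simp add: simple_temporal_clique_def)
  have inA: "\<And>u v. (u,v) \<in> A \<Longrightarrow> {u,v} = emin V lab v \<and> u\<in>V \<and> v\<in>V \<and> u\<noteq>v"
    using va unfolding valid_Eminus_def by auto
  have Asub: "A \<subseteq> V \<times> V" using inA by auto
  have finA: "finite A" using finV Asub finite_subset by blast
  have ETsub: "ET lab A \<subseteq> A \<union> converse A" unfolding ET_def non_top_arc_def by auto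
  have finET: "finite (ET lab A)" using ETsub finA finite_subset by blast
  define K where "K = emitters V lab A"
  have KV: "K \<subseteq> V" unfolding K_def emitters_def by auto
  have out0ET: "(u,w) \<notin> ET lab A" if u: "u \<in> K" for u w
  proof
    assume uw: "(u,w) \<in> ET lab A"
    have "{w. (u,w) \<in> ET lab A} \<subseteq> snd ` ET lab A" by force
    then have "finite {w. (u,w) \<in> ET lab A}" using finET finite_subset by blast
    moreover have "card {w. (u,w) \<in> ET lab A} = 0" using u unfolding K_def emitters_def outdeg_def by auto
    ultimately show False using uw by auto
  qed
  have out0: "(u,w) \<notin> A" if u: "u \<in> K" for u w
  proof
    assume uw: "(u,w) \<in> A"
    let ?S = "{w. (u,w) \<in> A}"
    have "?S \<subseteq> snd ` A" by force
    then have finS: "finite ?S" using finA finite_subset by blast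
    let ?M = "Max ((\<lambda>x. lab {u,x}) ` ?S)"
    have "?M \<in> (\<lambda>x. lab {u,x}) ` ?S" using finS uw by (intro Max_in) auto
    then obtain m where m: "(u,m) \<in> A" "?M = lab {u,m}" by auto
    have "\<forall>x\<in>?S. lab {u,x} \<le> lab {u,m}" using finS m(2) by (metis (no_types, lifting) Max_ge finite_imageI image_eqI)
    then have "\<not> non_top_arc lab A u m" unfolding non_top_arc_def by fastforce
    then have "(u,m) \<in> ET lab A" using m(1) unfolding ET_def by auto
    then show False using out0ET u by blast
  qed
  have parent: "\<exists>p. (p,u) \<in> A \<and> p \<in> V - K" if u: "u \<in> K" and n2: "card V \<ge> 2" for u
  proof -
    have uV: "u \<in> V" using u KV by auto
    obtain v where v: "v \<in> V" "v \<noteq> u"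
    proof -
      have "V - {u} \<noteq> {}"
      proof
        assume "V - {u} = {}"
        then have "V \<subseteq> {u}" by auto
        then have "card V \<le> 1" using card_mono[of "{u}" V] by auto
        then show False using n2 by simp
      qed
      then show ?thesis using that by blast
    qed
    have "emin V lab u \<in> clique_edges V \<and> u \<in> emin V lab u"
      unfolding emin_def
      by (rule arg_min_natI[where k="{u,v}"]) (use v uV in \<open>auto simp: clique_edges_def\<close>)
    then obtain x y where xy: "emin V lab u = {x,y}" "x \<in> V" "y \<in> V" "x \<noteq> y" "u \<in> {x,y}"
      unfolding clique_edges_def by blast
    then obtain p where p: "p \<in> V" "p \<noteq> u" "{p,u} = emin V lab u" by auto
    have c: "if emin V lab p = {p, u} then ((p, u) \<in> A \<longleftrightarrow> (u, p) \<notin> A) else (p, u) \<in> A"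
      using va p uV unfolding valid_Eminus_def by blast
    have "(p,u) \<in> A" using c out0[OF u, of p] by (auto split: if_splits)
    moreover have "p \<notin> K" using out0 \<open>(p,u) \<in> A\<close> by blast
    ultimately show ?thesis using p by blast
  qed
  define k where "k = card K"
  define n where "n = card V"
  have finK: "finite K" using KV finV finite_subset by blast
  have kn: "k \<le> n" unfolding k_def n_def using KV finV card_mono by blast
  have k2: "2 * k \<le> n \<or> n \<le> 1"
  proof (cases "card V \<ge> 2")
    case True
    define par where "par u = (SOME p. (p,u) \<in> A \<and> p \<in> V - K)" for u
    have par: "(par u, u) \<in> A \<and> par u \<in> V - K" if "u \<in> K" for u
      unfolding par_def using parent[OF that True] by (rule someI_ex)
    have "inj_on par K"
    proof (rule inj_onI, rule ccontr)
      fix u u' assume uK: "u \<in> K" and u'K: "u' \<in> K" and eq: "par u = par u'" and ne: "u \<noteq> u'"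
      define p where "p = par u"
      have a1: "(p,u) \<in> A" using par[OF uK] unfolding p_def by blast
      have a2: "(p,u') \<in> A" using par[OF u'K] eq unfolding p_def by simp
      have "{w. (p,w) \<in> A} \<subseteq> snd ` A" by force
      then have "finite {w. (p,w) \<in> A}" using finA finite_subset by blast
      moreover have "{u,u'} \<subseteq> {w. (p,w) \<in> A}" using a1 a2 by auto
      ultimately have "card {u,u'} \<le> card {w. (p,w) \<in> A}" by (rule card_mono)
      then have od: "outdeg A p \<ge> 2" using ne unfolding outdeg_def by simp
      have nt: "\<not> non_top_arc lab A p x" if "x \<in> K" for x
      proof
        assume "non_top_arc lab A p x"
        then have "(x,p) \<in> ET lab A"
          unfolding ET_def using out0[OF that] unfolding outdeg_def by auto
        then show False using out0ET[OF that] by blast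
      qed
      have l1: "\<not> lab {p,u'} > lab {p,u}" using nt[OF uK] a1 a2 od unfolding non_top_arc_def by blast
      have l2: "\<not> lab {p,u} > lab {p,u'}" using nt[OF u'K] a1 a2 od unfolding non_top_arc_def by blast
      have e1: "{p,u} \<in> clique_edges V" "{p,u'} \<in> clique_edges V"
        using inA[OF a1] inA[OF a2] unfolding clique_edges_def by blast+
      have neq: "{p,u} \<noteq> {p,u'}" using ne by (simp add: doubleton_eq_iff)
      have int: "{p,u} \<inter> {p,u'} \<noteq> {}" by auto
      have H: "\<forall>e \<in> clique_edges V. \<forall>f \<in> clique_edges V. e \<noteq> f \<and> e \<inter> f \<noteq> {} \<longrightarrow> lab e \<noteq> lab f"
        using st unfolding simple_temporal_clique_def by blast
      have "{p,u} \<noteq> {p,u'} \<and> {p,u} \<inter> {p,u'} \<noteq> {} \<longrightarrow> lab {p,u} \<noteq> lab {p,u'}"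
        using bspec[OF bspec[OF H e1(1)] e1(2)] .
      then have "lab {p,u} \<noteq> lab {p,u'}" using neq int by (rule mp[OF _ conjI])
      then show False using l1 l2 by linarith
    qed
    moreover have "par ` K \<subseteq> V - K" using par by blast
    ultimately have "card K \<le> card (V - K)" using finV by (meson card_inj_on_le finite_Diff)
    then have "k \<le> n - k" unfolding k_def n_def using card_Diff_subset[OF finK KV] by simp
    then show ?thesis using kn by linarith
  next
    case False then show ?thesis unfolding n_def by simp
  qed
  have P1: "{{u, v} | u v. (u, v) \<in> ET lab A} \<subseteq> (\<lambda>(x,y). {x,y}) ` A"
  proof
    fix e assume "e \<in> {{u, v} | u v. (u, v) \<in> ET lab A}"
    then obtain u v where e: "e = {u,v}" "(u,v) \<in> ET lab A" by blast
    then have "(u,v) \<in> A \<or> (v,u) \<in> A" using ETsub by auto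
    then show "e \<in> (\<lambda>(x,y). {x,y}) ` A"
    proof
      assume "(u,v) \<in> A" then show ?thesis using e by (simp add: rev_image_eqI)
    next
      assume h: "(v,u) \<in> A"
      have "e = (\<lambda>(x,y). {x,y}) (v,u)" using e by auto
      then show ?thesis using h by blast
    qed
  qed
  have injsnd: "inj_on snd A"
  proof (rule inj_onI)
    fix a b assume a: "a \<in> A" and b: "b \<in> A" and s: "snd a = snd b"
    obtain u v where av: "a = (u,v)" by (cases a)
    moreover obtain u' v' where bv: "b = (u',v')" by (cases b)
    ultimately have vv: "v' = v" using s by simp
    have "{u,v} = emin V lab v" using inA a av by blast
    moreover have "{u',v} = emin V lab v" using inA b bv vv by blast
    ultimately have "{u,v} = {u',v}" by simp
    then have "u = u'" by (auto simp: doubleton_eq_iff)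
    then show "a = b" using av bv vv by simp
  qed
  have "card A \<le> n" unfolding n_def using card_inj_on_le[OF injsnd _ finV] Asub by force
  then have c1: "card {{u, v} | u v. (u, v) \<in> ET lab A} \<le> n"
    using card_mono[OF finite_imageI[OF finA] P1] card_image_le[OF finA, of "\<lambda>(x,y). {x,y}"] by linarith
  have P2: "{e \<in> clique_edges V. \<exists>u \<in> emitters V lab A. u \<in> e} \<subseteq>
      (\<lambda>(x,y). {x,y}) ` (K \<times> (V - K)) \<union> {B. B \<subseteq> K \<and> card B = 2}"
  proof
    fix e assume "e \<in> {e \<in> clique_edges V. \<exists>u \<in> emitters V lab A. u \<in> e}"
    then obtain x y u where e: "e = {x,y}" "x \<in> V" "y \<in> V" "x \<noteq> y" "u \<in> K" "u \<in> e"
      unfolding clique_edges_def K_def by blast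
    show "e \<in> (\<lambda>(x,y). {x,y}) ` (K \<times> (V - K)) \<union> {B. B \<subseteq> K \<and> card B = 2}"
    proof (cases "x \<in> K \<and> y \<in> K")
      case True then show ?thesis using e by auto
    next
      case False
      then have "(x \<in> K \<and> y \<in> V - K) \<or> (y \<in> K \<and> x \<in> V - K)" using e by auto
      then show ?thesis
      proof
        assume h: "x \<in> K \<and> y \<in> V - K"
        have "e = (\<lambda>(x,y). {x,y}) (x,y)" using e by auto
        then show ?thesis using h by blast
      next
        assume h: "y \<in> K \<and> x \<in> V - K"
        have "e = (\<lambda>(x,y). {x,y}) (y,x)" using e by auto
        then show ?thesis using h by blast
      qed
    qed
  qed
  have "card ((\<lambda>(x,y). {x,y}) ` (K \<times> (V - K))) \<le> k * (n - k)"
    using card_image_le[of "K \<times> (V - K)" "\<lambda>(x,y). {x,y}"] finK finV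
    unfolding k_def n_def by (simp add: card_cartesian_product card_Diff_subset[OF finK KV])
  moreover have "card {B. B \<subseteq> K \<and> card B = 2} = k choose 2" unfolding k_def using n_subsets[OF finK] .
  moreover have "finite ((\<lambda>(x,y). {x,y}) ` (K \<times> (V - K)) \<union> {B. B \<subseteq> K \<and> card B = 2})"
    using finK finV by auto
  ultimately have c2: "card {e \<in> clique_edges V. \<exists>u \<in> emitters V lab A. u \<in> e} \<le> k * (n - k) + (k choose 2)"
    using card_mono[OF _ P2] card_Un_le[of "(\<lambda>(x,y). {x,y}) ` (K \<times> (V - K))" "{B. B \<subseteq> K \<and> card B = 2}"]
    by linarith
  have "card (fireworks_cover V lab A) \<le> n + (k * (n - k) + (k choose 2))"
    unfolding fireworks_cover_def using c1 c2 card_Un_le[of "{{u, v} | u v. (u, v) \<in> ET lab A}" "{e \<in> clique_edges V. \<exists>u \<in> emitters V lab A. u \<in> e}"]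
    by linarith
  then have "real (card (fireworks_cover V lab A)) \<le> real n + real k * (real n - real k) + real (k choose 2)"
  proof -
    have h: "card (fireworks_cover V lab A) \<le> n + (k * (n - k) + (k choose 2))" by fact
    have "real (card (fireworks_cover V lab A)) \<le> real (n + (k * (n - k) + (k choose 2)))"
      using h by (simp only: of_nat_le_iff)
    also have "\<dots> = real n + real k * (real n - real k) + real (k choose 2)"
      using kn by (simp add: of_nat_diff)
    finally show ?thesis .
  qed
  moreover have "2 * real (k choose 2) = real k * (real k - 1)" by (rule choose2_real)
  moreover have "2 * real (n choose 2) = real n * (real n - 1)" by (rule choose2_real)
  moreover have "3 * real n * real n - 8 * real k * real n + 4 * real k * real k + 5 * real n + 4 * real k \<ge> 0"
  proof (cases "2 * k \<le> n")
    case True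
    then have "(real n - 2 * real k) * (3 * real n - 2 * real k) \<ge> 0" using kn by (auto intro!: mult_nonneg_nonneg)
    then show ?thesis by (simp add: algebra_simps)
  next
    case False
    then have "n \<le> 1" using k2 by simp
    then have "n = 0 \<or> n = 1" by auto
    moreover have "k \<le> n" by (rule kn)
    ultimately have "(n = 0 \<and> k = 0) \<or> (n = 1 \<and> k = 0) \<or> (n = 1 \<and> k = 1)" by auto
    then show ?thesis by auto
  qed
  ultimately have "real (card (fireworks_cover V lab A)) \<le> 3/4 * real (n choose 2) + 2 * real n"
    by (simp add: algebra_simps) 
  then show ?thesis unfolding n_def .
qed

theorem theorem3:
  shows "\<exists>C :: real. \<forall>(V :: nat set) (lab :: nat set \<Rightarrow> nat) (A :: (nat \<times> nat) set).
           simple_temporal_clique V lab \<and> valid_Eminus V lab A \<longrightarrow>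
           real (card (fireworks_cover V lab A)) \<le> 3 / 4 * real (card V choose 2) + C * real (card V)"
  using main by blast

end
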